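(* Let $n,d,a,k$ be positive integers and suppose the triple $(n,d,a)$ is bad. Then (1) $(n,kd,a)$ is bad; (2) $(kn,d,a)$ is bad; (3) $(kn,kd,ka)$ is bad.
   Context: For positive integers $N,D,A$, let $R=\mathbb{C}[x_1,\dots,x_N]$ with $\mathfrak{S}_N$ permuting variables and $R_A^{\mathfrak{S}_N}$ the symmetric polynomials homogeneous of degree $A$. The triple $(N,D,A)$ is good if there exists $f\in R_A^{\mathfrak{S}_N}$ such that $x_1^D-x_N^D,\dots,x_{N-1}^D-x_N^D,f$ is a regular sequence (equivalently, $f$ has no zero on $\mathcal{V}_D=\{(z_1,\dots,z_N)\in\mathbb{C}^N: z_i^D=1\ \forall i,\ z_N=1\}$); otherwise it is bad. *)

theory Defs
  imports Complex_Main "HOL-Combinatorics.Permutations"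
begin

text \<open>Multivariate polynomials are not in the distribution, so a homogeneous polynomial
 of degree A in x_0,...,x_{N-1} is represented by its coefficient function on exponent
 vectors alpha (nat => nat) supported in {..<N} with total degree A.\<close>

definition exps :: "nat \<Rightarrow> nat \<Rightarrow> (nat \<Rightarrow> nat) set" where
  "exps N A = {\<alpha>. (\<forall>i\<ge>N. \<alpha> i = 0) \<and> (\<Sum>i<N. \<alpha> i) = A}"

definition symmetric_coeffs :: "nat \<Rightarrow> ((nat \<Rightarrow> nat) \<Rightarrow> complex) \<Rightarrow> bool" where
  "symmetric_coeffs N c \<longleftrightarrow> (\<forall>\<alpha> \<sigma>. \<sigma> permutes {..<N} \<longrightarrow> c (\<alpha> \<circ> \<sigma>) = c \<alpha>)"

definition hom_eval :: "nat \<Rightarrow> nat \<Rightarrow> ((nat \<Rightarrow> nat) \<Rightarrow> complex) \<Rightarrow> (nat \<Rightarrow> complex) \<Rightarrow> complex" where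
  "hom_eval N A c z = (\<Sum>\<alpha>\<in>exps N A. c \<alpha> * (\<Prod>i<N. z i ^ \<alpha> i))"

text \<open>V_D = {z in C^N : z_i^D = 1 for all i, z_N = 1}; coordinates are indexed 0..N-1,
 points of C^N are functions vanishing outside {..<N}.\<close>
definition V :: "nat \<Rightarrow> nat \<Rightarrow> (nat \<Rightarrow> complex) set" where
  "V N D = {z. (\<forall>i<N. z i ^ D = 1) \<and> z (N - 1) = 1 \<and> (\<forall>i\<ge>N. z i = 0)}"

definition good :: "nat \<Rightarrow> nat \<Rightarrow> nat \<Rightarrow> bool" where
  "good N D A \<longleftrightarrow> (\<exists>c. symmetric_coeffs N c \<and> (\<forall>z\<in>V N D. hom_eval N A c z \<noteq> 0))"

definition bad :: "nat \<Rightarrow> nat \<Rightarrow> nat \<Rightarrow> bool" where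
  "bad N D A \<longleftrightarrow> \<not> good N D A"

end

theory Submission
  imports Defs "HOL-Analysis.Analysis"
begin

lemma finite_exps: "finite (exps N A)"
proof -
  have "exps N A \<subseteq> {f. \<forall>x. (x \<in> {..<N} \<longrightarrow> f x \<in> {..A}) \<and> (x \<notin> {..<N} \<longrightarrow> f x = 0)}"
  proof
    fix \<alpha> assume a: "\<alpha> \<in> exps N A"
    have "\<alpha> x \<le> A" if "x < N" for x
    proof -
      have "\<alpha> x \<le> (\<Sum>i<N. \<alpha> i)" using that by (intro member_le_sum) auto
      thus ?thesis using a by (simp add: exps_def)
    qed
    thus "\<alpha> \<in> {f. \<forall>x. (x \<in> {..<N} \<longrightarrow> f x \<in> {..A}) \<and> (x \<notin> {..<N} \<longrightarrow> f x = 0)}"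
      using a by (auto simp: exps_def)
  qed
  thus ?thesis by (rule finite_subset) (rule finite_set_of_finite_funs; simp)
qed

lemma hom_eval_cong: "(\<And>i. i < N \<Longrightarrow> z i = z' i) \<Longrightarrow> hom_eval N A c z = hom_eval N A c z'"
  unfolding hom_eval_def by (intro sum.cong refl arg_cong2[where f="(*)"] prod.cong) auto

lemma hom_eval_sum: "finite X \<Longrightarrow> hom_eval N A (\<lambda>\<beta>. \<Sum>x\<in>X. g x \<beta>) z = (\<Sum>x\<in>X. hom_eval N A (g x) z)"
  unfolding hom_eval_def by (simp add: sum_distrib_right sum.swap[of _ X])

lemma hom_eval_scale: "hom_eval N A (\<lambda>\<beta>. r * c \<beta>) z = r * hom_eval N A c z"
  unfolding hom_eval_def by (simp add: sum_distrib_left mult.assoc)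

lemma exps_perm_bij:
  assumes s: "\<sigma> permutes {..<N}"
  shows "bij_betw (\<lambda>\<beta>. \<beta> \<circ> \<sigma>) (exps N A) (exps N A)"
proof -
  have mem: "\<beta> \<circ> p \<in> exps N A" if p: "p permutes {..<N}" and b: "\<beta> \<in> exps N A" for \<beta> p
  proof -
    have "(\<Sum>i<N. \<beta> (p i)) = (\<Sum>i<N. \<beta> i)"
      using sum.permute[OF p, of \<beta>] by (simp add: comp_def)
    moreover have "\<forall>i\<ge>N. \<beta> (p i) = 0" using b p by (auto simp: exps_def permutes_not_in)
    ultimately show ?thesis using b by (simp add: exps_def)
  qed
  show ?thesis
  proof (rule bij_betwI[where g="\<lambda>\<beta>. \<beta> \<circ> inv \<sigma>"])
    show "(\<lambda>\<beta>. \<beta> \<circ> \<sigma>) \<in> exps N A \<rightarrow> exps N A" using mem[OF s] by auto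
    show "(\<lambda>\<beta>. \<beta> \<circ> inv \<sigma>) \<in> exps N A \<rightarrow> exps N A" using mem[OF permutes_inv[OF s]] by auto
    show "\<beta> \<circ> \<sigma> \<circ> inv \<sigma> = \<beta>" for \<beta>
      using permutes_surj[OF s] by (simp add: comp_assoc surj_iff)
    show "\<beta> \<circ> inv \<sigma> \<circ> \<sigma> = \<beta>" for \<beta>
      using permutes_inj[OF s] by (simp add: comp_assoc inj_iff)
  qed
qed

lemma hom_eval_perm:
  assumes s: "\<sigma> permutes {..<N}"
  shows "hom_eval N A (\<lambda>\<beta>. c (\<beta> \<circ> \<sigma>)) z = hom_eval N A c (z \<circ> \<sigma>)"
proof -
  have m: "(\<Prod>i<N. z i ^ \<beta> i) = (\<Prod>i<N. (z \<circ> \<sigma>) i ^ (\<beta> \<circ> \<sigma>) i)" for \<beta>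
    using prod.permute[OF s, of "\<lambda>i. z i ^ \<beta> i"] by (simp add: comp_def)
  have "hom_eval N A (\<lambda>\<beta>. c (\<beta> \<circ> \<sigma>)) z = (\<Sum>\<beta>\<in>exps N A. (\<lambda>\<gamma>. c \<gamma> * (\<Prod>i<N. (z \<circ> \<sigma>) i ^ \<gamma> i)) (\<beta> \<circ> \<sigma>))"
    unfolding hom_eval_def using m by simp
  also have "\<dots> = (\<Sum>\<gamma>\<in>exps N A. c \<gamma> * (\<Prod>i<N. (z \<circ> \<sigma>) i ^ \<gamma> i))"
    using sum.reindex_bij_betw[OF exps_perm_bij[OF s], of "\<lambda>\<gamma>. c \<gamma> * (\<Prod>i<N. (z \<circ> \<sigma>) i ^ \<gamma> i)"] by simp
  finally show ?thesis unfolding hom_eval_def .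
qed

lemma sym_fun:
  assumes "symmetric_coeffs N c" "\<sigma> permutes {..<N}"
  shows "hom_eval N A c (z \<circ> \<sigma>) = hom_eval N A c z"
  using hom_eval_perm[OF assms(2), where c=c and A=A and z=z] assms(1) assms(2)
  unfolding symmetric_coeffs_def by simp

lemma good_from_fun_sym:
  assumes sym: "\<And>\<sigma> z. \<sigma> permutes {..<N} \<Longrightarrow> hom_eval N A c (z \<circ> \<sigma>) = hom_eval N A c z"
    and nz: "\<And>z. z \<in> V N D \<Longrightarrow> hom_eval N A c z \<noteq> 0"
  shows "good N D A"
proof -
  define P where "P = {\<sigma>. \<sigma> permutes {..<N}}"
  have fP: "finite P" unfolding P_def by (rule finite_permutations) simp
  have "id \<in> P" unfolding P_def by (simp add: permutes_id)
  hence cP: "card P \<noteq> 0" using fP by auto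
  define cs where "cs = (\<lambda>\<beta>. (1 / of_nat (card P)) * (\<Sum>\<sigma>\<in>P. c (\<beta> \<circ> \<sigma>)))"
  have ev: "hom_eval N A cs z = hom_eval N A c z" for z
  proof -
    have "hom_eval N A cs z = (1 / of_nat (card P)) * (\<Sum>\<sigma>\<in>P. hom_eval N A (\<lambda>\<beta>. c (\<beta> \<circ> \<sigma>)) z)"
      unfolding cs_def hom_eval_scale hom_eval_sum[OF fP] ..
    also have "\<dots> = (1 / of_nat (card P)) * (\<Sum>\<sigma>\<in>P. hom_eval N A c z)"
      by (intro arg_cong2[where f="(*)"] refl sum.cong) (auto simp: P_def hom_eval_perm sym)
    finally show ?thesis using cP by simp
  qed
  have "symmetric_coeffs N cs"
    unfolding symmetric_coeffs_def
  proof (intro allI impI)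
    fix \<alpha> \<tau> assume t: "\<tau> permutes {..<N}"
    have "(\<Sum>\<sigma>\<in>P. c (\<alpha> \<circ> \<tau> \<circ> \<sigma>)) = (\<Sum>\<sigma>\<in>P. c (\<alpha> \<circ> \<sigma>))"
    proof -
      have bb: "bij_betw ((\<circ>) \<tau>) P P"
      proof (rule bij_betwI[where g="\<lambda>\<sigma>. inv \<tau> \<circ> \<sigma>"])
        show "(\<circ>) \<tau> \<in> P \<rightarrow> P" using t by (auto simp: P_def permutes_compose)
        show "(\<lambda>\<sigma>. inv \<tau> \<circ> \<sigma>) \<in> P \<rightarrow> P" using t by (auto simp: P_def permutes_compose permutes_inv)
        show "inv \<tau> \<circ> (\<tau> \<circ> x) = x" for x using permutes_inj[OF t] by (metis comp_assoc inv_o_cancel id_comp)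
        show "\<tau> \<circ> (inv \<tau> \<circ> y) = y" for y using permutes_surj[OF t] by (metis comp_assoc surj_iff id_comp)
      qed
      show ?thesis using sum.reindex_bij_betw[OF bb, of "\<lambda>\<sigma>. c (\<alpha> \<circ> \<sigma>)"] by (simp add: comp_assoc)
    qed
    thus "cs (\<alpha> \<circ> \<tau>) = cs \<alpha>" unfolding cs_def by simp
  qed
  thus ?thesis unfolding good_def using nz ev by metis
qed


lemma hom_eval_subst:
  assumes mN: "\<And>j. j < M \<Longrightarrow> m j < N"
  shows "\<exists>c'. \<forall>z. hom_eval M A c (\<lambda>j. s j * z (m j)) = hom_eval N A c' z"
proof -
  define push where "push = (\<lambda>\<alpha>::nat\<Rightarrow>nat. \<lambda>i. \<Sum>j\<in>{j. j \<in> {..<M} \<and> m j = i}. \<alpha> j)"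
  define c' where "c' = (\<lambda>\<beta>. \<Sum>\<alpha>\<in>{\<alpha>. \<alpha> \<in> exps M A \<and> push \<alpha> = \<beta>}. c \<alpha> * (\<Prod>j<M. s j ^ \<alpha> j))"
  have img: "m ` {..<M} \<subseteq> {..<N}" using mN by auto
  have pushin: "push \<alpha> \<in> exps N A" if a: "\<alpha> \<in> exps M A" for \<alpha>
  proof -
    have "\<forall>i\<ge>N. push \<alpha> i = 0"
    proof (intro allI impI)
      fix i assume "N \<le> i"
      hence "{j. j \<in> {..<M} \<and> m j = i} = {}" using mN by force
      thus "push \<alpha> i = 0" unfolding push_def by (metis sum.empty)
    qed
    moreover have "(\<Sum>i<N. push \<alpha> i) = (\<Sum>j<M. \<alpha> j)"
      unfolding push_def by (rule sum.group[OF _ _ img]) auto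
    ultimately show ?thesis using a by (simp add: exps_def)
  qed
  have mono: "(\<Prod>j<M. z (m j) ^ \<alpha> j) = (\<Prod>i<N. z i ^ push \<alpha> i)" for z \<alpha>
  proof -
    have "(\<Prod>j<M. z (m j) ^ \<alpha> j) = (\<Prod>i<N. \<Prod>j\<in>{j. j \<in> {..<M} \<and> m j = i}. z (m j) ^ \<alpha> j)"
      by (rule sum.group[OF _ _ img, symmetric, THEN trans[OF _ refl]] prod.group[OF _ _ img, symmetric]) auto
    also have "\<dots> = (\<Prod>i<N. \<Prod>j\<in>{j. j \<in> {..<M} \<and> m j = i}. z i ^ \<alpha> j)"
      by (intro prod.cong refl) auto
    also have "\<dots> = (\<Prod>i<N. z i ^ push \<alpha> i)"
      by (simp add: push_def power_sum)
    finally show ?thesis .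
  qed
  have "hom_eval M A c (\<lambda>j. s j * z (m j)) = hom_eval N A c' z" for z
  proof -
    have "hom_eval M A c (\<lambda>j. s j * z (m j)) = (\<Sum>\<alpha>\<in>exps M A. c \<alpha> * (\<Prod>j<M. s j ^ \<alpha> j) * (\<Prod>i<N. z i ^ push \<alpha> i))"
      unfolding hom_eval_def by (intro sum.cong refl) (simp add: power_mult_distrib prod.distrib mono mult.assoc)
    also have "\<dots> = (\<Sum>\<beta>\<in>exps N A. \<Sum>\<alpha>\<in>{\<alpha>. \<alpha> \<in> exps M A \<and> push \<alpha> = \<beta>}. c \<alpha> * (\<Prod>j<M. s j ^ \<alpha> j) * (\<Prod>i<N. z i ^ push \<alpha> i))"
      by (rule sum.group[symmetric]) (auto simp: finite_exps pushin)
    also have "\<dots> = hom_eval N A c' z"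
      unfolding hom_eval_def c'_def sum_distrib_right by (intro sum.cong refl) auto
    finally show ?thesis .
  qed
  thus ?thesis by blast
qed


lemma lt_kn: "r < n \<Longrightarrow> q < k \<Longrightarrow> r + n * q < k * (n::nat)"
proof -
  assume "r < n" "q < k"
  hence "r + n * q < n * (q + 1)" by simp
  also have "\<dots> \<le> n * k" using \<open>q < k\<close> by (intro mult_le_mono2) simp
  finally show ?thesis by (simp add: mult.commute)
qed

lemma block_permutes:
  fixes n k :: nat and \<rho> :: "nat \<Rightarrow> nat" and \<pi> :: "nat \<Rightarrow> nat \<Rightarrow> nat"
  assumes n: "n > 0"
    and \<rho>i: "inj_on \<rho> {..<n}" and \<rho>s: "\<And>r. r < n \<Longrightarrow> \<rho> r < n"
    and \<pi>i: "\<And>r. r < n \<Longrightarrow> inj_on (\<pi> r) {..<k}" and \<pi>s: "\<And>r q. r < n \<Longrightarrow> q < k \<Longrightarrow> \<pi> r q < k"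
  shows "(\<lambda>j. if j < k * n then \<rho> (j mod n) + n * \<pi> (j mod n) (j div n) else j) permutes {..<k*n}"
    (is "?t permutes _")
proof (rule bij_imp_permutes)
  show "?t x = x" if "x \<notin> {..<k * n}" for x using that by simp
  have dk: "j div n < k" if "j < k * n" for j using that n
    by (simp add: div_less_iff_less_mult mult.commute)
  have sub: "?t ` {..<k*n} \<subseteq> {..<k*n}"
  proof
    fix y assume "y \<in> ?t ` {..<k*n}"
    then obtain j where j: "j < k * n" "y = ?t j" by auto
    thus "y \<in> {..<k*n}" using lt_kn[OF \<rho>s \<pi>s] dk[OF j(1)] n by simp
  qed
  have inj: "inj_on ?t {..<k*n}"
  proof (rule inj_onI)
    fix j j' assume j: "j \<in> {..<k*n}" and j': "j' \<in> {..<k*n}" and eq: "?t j = ?t j'"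
    let ?r = "j mod n" and ?r' = "j' mod n"
    have r: "?r < n" "?r' < n" using n by auto
    have e2: "\<rho> ?r + n * \<pi> ?r (j div n) = \<rho> ?r' + n * \<pi> ?r' (j' div n)" using eq j j' by simp
    hence "(\<rho> ?r + n * \<pi> ?r (j div n)) mod n = (\<rho> ?r' + n * \<pi> ?r' (j' div n)) mod n" by simp
    hence "\<rho> ?r = \<rho> ?r'" using \<rho>s[OF r(1)] \<rho>s[OF r(2)] by simp
    hence rr: "?r = ?r'" using \<rho>i r by (auto dest: inj_onD)
    hence "\<pi> ?r (j div n) = \<pi> ?r (j' div n)" using e2 n by simp
    hence "j div n = j' div n" using \<pi>i[OF r(1)] dk j j' by (auto dest: inj_onD)
    thus "j = j'" using rr by (metis div_mult_mod_eq)
  qed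
  show "bij_betw ?t {..<k*n} {..<k*n}"
    unfolding bij_betw_def using inj endo_inj_surj[OF _ sub inj] by simp
qed

lemma mod_inj_aux: "(q::nat) < k \<Longrightarrow> q' < k \<Longrightarrow> (q + e) mod k = (q' + e) mod k \<Longrightarrow> q = q'"
proof -
  have *: "q = q'" if "q' \<le> q" "q < k" "(q + e) mod k = (q' + e) mod k" for q q' :: nat
  proof -
    have "k dvd (q + e) - (q' + e)" using mod_eq_dvd_iff_nat[of "q'+e" "q+e" k] that by simp
    hence "k dvd q - q'" by simp
    moreover have "q - q' < k" using that by simp
    ultimately have "q - q' = 0" using nat_dvd_not_less by blast
    thus ?thesis using that by simp
  qed
  assume "q < k" "q' < k" "(q + e) mod k = (q' + e) mod k"
  thus "q = q'" using *[of q' q] *[of q q'] by (cases "q' \<le> q") auto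
qed

definition blk :: "nat \<Rightarrow> complex \<Rightarrow> (nat \<Rightarrow> complex) \<Rightarrow> nat \<Rightarrow> complex" where
  "blk n \<zeta> u = (\<lambda>j. \<zeta> ^ (j div n) * u (j mod n))"

lemma block_poly:
  assumes "n > 0"
  shows "\<exists>c1. \<forall>u. hom_eval (k*n) A c (blk n \<zeta> u) = hom_eval n A c1 u"
  unfolding blk_def by (rule hom_eval_subst) (use assms in simp)

lemma block_sym:
  assumes n: "n > 0" and c: "symmetric_coeffs (k*n) c" and s: "\<sigma> permutes {..<n}"
  shows "hom_eval (k*n) A c (blk n \<zeta> (u \<circ> \<sigma>)) = hom_eval (k*n) A c (blk n \<zeta> u)"
proof -
  let ?t = "\<lambda>j. if j < k * n then \<sigma> (j mod n) + n * (j div n) else j"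
  have p: "?t permutes {..<k*n}"
    using block_permutes[OF n, where \<rho>=\<sigma> and \<pi>="\<lambda>r q. q" and k=k] permutes_inj_on[OF s] permutes_in_image[OF s]
    by simp
  have "hom_eval (k*n) A c (blk n \<zeta> (u \<circ> \<sigma>)) = hom_eval (k*n) A c (blk n \<zeta> u \<circ> ?t)"
  proof (rule hom_eval_cong)
    fix j assume "j < k * n"
    moreover have "\<sigma> (j mod n) < n" using permutes_in_image[OF s] n by simp
    ultimately show "blk n \<zeta> (u \<circ> \<sigma>) j = (blk n \<zeta> u \<circ> ?t) j" by (simp add: blk_def)
  qed
  also have "\<dots> = hom_eval (k*n) A c (blk n \<zeta> u)" by (rule sym_fun[OF c p])
  finally show ?thesis .
qed

lemma pow_mod_k: "\<zeta> ^ k = (1::complex) \<Longrightarrow> \<zeta> ^ (x mod k) = \<zeta> ^ x"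
  by (metis div_mult_mod_eq mult.commute power_add power_mult power_one mult_1)

lemma block_twist:
  assumes n: "n > 0" and k: "k > 0" and c: "symmetric_coeffs (k*n) c" and z: "\<zeta> ^ k = 1"
  shows "hom_eval (k*n) A c (blk n \<zeta> (\<lambda>i. \<zeta> ^ e i * u i)) = hom_eval (k*n) A c (blk n \<zeta> u)"
proof -
  let ?t = "\<lambda>j. if j < k * n then j mod n + n * ((j div n + e (j mod n)) mod k) else j"
  have inj: "inj_on (\<lambda>q. (q + e r) mod k) {..<k}" for r
  proof (rule inj_onI)
    fix q q' assume "q \<in> {..<k}" "q' \<in> {..<k}" "(q + e r) mod k = (q' + e r) mod k"
    thus "q = q'" using mod_inj_aux by simp
  qed
  have p: "?t permutes {..<k*n}"
    using block_permutes[OF n, where \<rho>="\<lambda>r. r" and \<pi>="\<lambda>r q. (q + e r) mod k" and k=k] k inj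
    by simp
  have "hom_eval (k*n) A c (blk n \<zeta> (\<lambda>i. \<zeta> ^ e i * u i)) = hom_eval (k*n) A c (blk n \<zeta> u \<circ> ?t)"
  proof (rule hom_eval_cong)
    fix j assume "j < k * n"
    have d: "(j mod n + n * ((j div n + e (j mod n)) mod k)) div n = (j div n + e (j mod n)) mod k"
      using n by simp
    have m: "(j mod n + n * ((j div n + e (j mod n)) mod k)) mod n = j mod n"
      using n by simp
    show "blk n \<zeta> (\<lambda>i. \<zeta> ^ e i * u i) j = (blk n \<zeta> u \<circ> ?t) j"
      using \<open>j < k * n\<close> by (simp add: blk_def d m pow_mod_k[OF z] power_add)
  qed
  also have "\<dots> = hom_eval (k*n) A c (blk n \<zeta> u)" by (rule sym_fun[OF c p])
  finally show ?thesis .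
qed


lemma kn_divmod:
  fixes n k :: nat
  assumes "n > 0" "k > 0"
  shows "(k * n - 1) mod n = n - 1" "(k * n - 1) div n = k - 1"
proof -
  have e: "k * n - 1 = (n - 1) + n * (k - 1)" using assms
    by (cases k; cases n) (auto simp: algebra_simps)
  have a: "(n - 1 + n * (k - 1)) mod n = (n - 1) mod n" by (rule mod_mult_self2)
  have b: "(n - 1 + n * (k - 1)) div n = k - 1 + (n - 1) div n" using assms by (intro div_mult_self2) simp
  show "(k * n - 1) mod n = n - 1" using a assms by (simp only: e) simp
  show "(k * n - 1) div n = k - 1" using b assms by (simp only: e) simp
qed

lemma part1:
  assumes "good n (k * d) a" "k > 0"
  shows "good n d a"
proof -
  have "V n d \<subseteq> V n (k * d)"
    by (auto simp: V_def power_mult mult.commute[of k d])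
  thus ?thesis using assms unfolding good_def by blast
qed

lemma part2:
  assumes g: "good (k * n) d a" and n: "n > 0" and k: "k > 0"
  shows "good n d a"
proof -
  obtain c where c: "symmetric_coeffs (k*n) c" and nz: "\<forall>z\<in>V (k*n) d. hom_eval (k*n) a c z \<noteq> 0"
    using g unfolding good_def by blast
  obtain c1 where c1: "\<And>u. hom_eval (k*n) a c (blk n 1 u) = hom_eval n a c1 u"
    using block_poly[OF n, of k a c 1] by blast
  show ?thesis
  proof (rule good_from_fun_sym[where c=c1])
    fix \<sigma> :: "nat \<Rightarrow> nat" and z :: "nat \<Rightarrow> complex" assume s: "\<sigma> permutes {..<n}"
    show "hom_eval n a c1 (z \<circ> \<sigma>) = hom_eval n a c1 z"
      using block_sym[OF n c s] c1 by metis
  next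
    fix z :: "nat \<Rightarrow> complex" assume z: "z \<in> V n d"
    define w where "w = (\<lambda>j. if j < k * n then blk n 1 z j else 0)"
    have "w \<in> V (k*n) d"
    proof -
      have "w j ^ d = 1" if "j < k * n" for j
        using that z n by (simp add: w_def blk_def V_def)
      moreover have "w (k * n - 1) = 1"
        using z n k kn_divmod[OF n k] by (simp add: w_def blk_def V_def)
      ultimately show ?thesis by (auto simp: V_def w_def)
    qed
    hence "hom_eval (k*n) a c w \<noteq> 0" using nz by blast
    moreover have "hom_eval (k*n) a c w = hom_eval (k*n) a c (blk n 1 z)"
      by (rule hom_eval_cong) (simp add: w_def)
    ultimately show "hom_eval n a c1 z \<noteq> 0" using c1 by simp
  qed
qed


definition zk :: "nat \<Rightarrow> complex" where "zk k = exp (2 * of_real pi * \<i> / of_nat k)"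

lemma zk_pow: "k > 0 \<Longrightarrow> zk k ^ g = 1 \<longleftrightarrow> k dvd g"
proof -
  assume k: "k > 0"
  have "zk k ^ g = exp (of_nat g * (2 * of_real pi * \<i> / of_nat k))"
    unfolding zk_def by (rule exp_of_nat_mult[symmetric])
  also have "\<dots> = exp (2 * of_real pi * \<i> * of_nat g / of_nat k)" by (simp add: field_simps)
  finally show ?thesis using complex_root_unity_eq_1[of k g] k by simp
qed

lemma zk_k: "k > 0 \<Longrightarrow> zk k ^ k = 1" using zk_pow[of k k] by simp

lemma char_sum: "k > 0 \<Longrightarrow> (\<Sum>x<k. zk k ^ (x * g)) = (if k dvd g then of_nat k else 0)"
proof -
  assume k: "k > 0"
  have eq: "(\<Sum>x<k. zk k ^ (x * g)) = (\<Sum>x<k. (zk k ^ g) ^ x)"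
    by (simp add: power_mult[symmetric] mult.commute)
  show ?thesis
  proof (cases "k dvd g")
    case True
    hence "zk k ^ g = 1" using zk_pow[OF k] by simp
    thus ?thesis using True eq by simp
  next
    case False
    hence ne: "zk k ^ g \<noteq> 1" using zk_pow[OF k] by simp
    have "(zk k ^ g) ^ k = 1" using zk_k[OF k] by (metis power_mult mult.commute power_one)
    thus ?thesis using False eq geometric_sum[OF ne, of k] by simp
  qed
qed

lemma part3:
  assumes g: "good (k * n) (k * d) (k * a)" and n: "n > 0" and k: "k > 0"
  shows "good n d a"
proof -
  obtain c where c: "symmetric_coeffs (k*n) c" and nz: "\<forall>z\<in>V (k*n) (k*d). hom_eval (k*n) (k*a) c z \<noteq> 0"
    using g unfolding good_def by blast
  define \<zeta> where "\<zeta> = zk k"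
  have \<zeta>k: "\<zeta> ^ k = 1" using zk_k[OF k] by (simp add: \<zeta>_def)
  obtain c1 where c1: "\<And>u. hom_eval (k*n) (k*a) c (blk n \<zeta> u) = hom_eval n (k*a) c1 u"
    using block_poly[OF n, of k "k*a" c \<zeta>] by blast
  have Finv: "hom_eval n (k*a) c1 (\<lambda>i. \<zeta> ^ e i * u i) = hom_eval n (k*a) c1 u" for e u
    using block_twist[OF n k c \<zeta>k, of "k*a" e u] c1 by metis
  define E where "E = PiE {..<n} (\<lambda>_. {..<k})"
  have fE: "finite E" unfolding E_def by (intro finite_PiE) auto
  have cE: "card E = k ^ n" unfolding E_def by (simp add: card_PiE)
  define ch where "ch = (\<lambda>\<gamma>::nat\<Rightarrow>nat. \<Prod>i<n. (\<Sum>x<k. \<zeta> ^ (x * \<gamma> i)))"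
  define c2 where "c2 = (\<lambda>\<gamma>. c1 \<gamma> * ch \<gamma> / of_nat (k ^ n))"
  have avg: "hom_eval n (k*a) c2 u = hom_eval n (k*a) c1 u" for u
  proof -
    have chE: "ch \<gamma> = (\<Sum>e\<in>E. \<Prod>i<n. \<zeta> ^ (e i * \<gamma> i))" for \<gamma>
      unfolding ch_def E_def by (rule prod_sum_PiE) auto
    have "(\<Sum>e\<in>E. hom_eval n (k*a) c1 (\<lambda>i. \<zeta> ^ e i * u i))
        = (\<Sum>e\<in>E. \<Sum>\<gamma>\<in>exps n (k*a). c1 \<gamma> * (\<Prod>i<n. \<zeta> ^ (e i * \<gamma> i)) * (\<Prod>i<n. u i ^ \<gamma> i))"
      unfolding hom_eval_def
      by (intro sum.cong refl) (simp add: power_mult_distrib prod.distrib power_mult mult.assoc)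
    also have "\<dots> = (\<Sum>\<gamma>\<in>exps n (k*a). c1 \<gamma> * ch \<gamma> * (\<Prod>i<n. u i ^ \<gamma> i))"
      by (subst sum.swap) (simp add: chE sum_distrib_left sum_distrib_right)
    also have "\<dots> = of_nat (k ^ n) * hom_eval n (k*a) c2 u"
      unfolding hom_eval_def c2_def sum_distrib_left using k by (intro sum.cong refl) simp
    finally have "of_nat (k ^ n) * hom_eval n (k*a) c2 u = (\<Sum>e\<in>E. hom_eval n (k*a) c1 u)"
      using Finv by simp
    also have "\<dots> = of_nat (k ^ n) * hom_eval n (k*a) c1 u" using cE by simp
    finally show ?thesis using k by simp
  qed
  have c2d: "c2 \<gamma> = (if \<forall>i<n. k dvd \<gamma> i then c1 \<gamma> else 0)" for \<gamma>
  proof -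
    have "ch \<gamma> = (\<Prod>i<n. if k dvd \<gamma> i then of_nat k else 0)"
      unfolding ch_def \<zeta>_def using char_sum[OF k] by simp
    thus ?thesis unfolding c2_def using k by (auto simp: prod_zero_iff)
  qed
  define c3 where "c3 = (\<lambda>\<beta>::nat\<Rightarrow>nat. c1 (\<lambda>i. k * \<beta> i))"
  define h where "h = (\<lambda>(\<beta>::nat\<Rightarrow>nat) i. k * \<beta> i)"
  have hinj: "inj_on h (exps n a)" unfolding h_def inj_on_def using k by (auto simp: fun_eq_iff)
  have hsub: "h ` exps n a \<subseteq> exps n (k*a)"
    by (auto simp: h_def exps_def sum_distrib_left[symmetric])
  have key: "hom_eval n a c3 (\<lambda>i. u i ^ k) = hom_eval n (k*a) c1 u" for u
  proof -
    have "hom_eval n (k*a) c2 u = (\<Sum>\<gamma>\<in>h ` exps n a. c2 \<gamma> * (\<Prod>i<n. u i ^ \<gamma> i))"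
      unfolding hom_eval_def
    proof (rule sum.mono_neutral_right[OF finite_exps hsub], rule ballI)
      fix \<gamma> assume g: "\<gamma> \<in> exps n (k*a) - h ` exps n a"
      have "\<not> (\<forall>i<n. k dvd \<gamma> i)"
      proof
        assume dv: "\<forall>i<n. k dvd \<gamma> i"
        define \<beta> where "\<beta> = (\<lambda>i. \<gamma> i div k)"
        have gb: "\<gamma> = h \<beta>"
        proof
          fix i show "\<gamma> i = h \<beta> i"
            using dv g by (cases "i < n") (auto simp: h_def \<beta>_def exps_def)
        qed
        have "k * (\<Sum>i<n. \<beta> i) = k * a"
          using g gb by (simp add: exps_def h_def sum_distrib_left)
        hence "\<beta> \<in> exps n a" using g k by (auto simp: exps_def \<beta>_def)
        thus False using g gb by blast
      qed
      thus "c2 \<gamma> * (\<Prod>i<n. u i ^ \<gamma> i) = 0" by (metis c2d mult_zero_left)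
    qed
    also have "\<dots> = (\<Sum>\<beta>\<in>exps n a. c2 (h \<beta>) * (\<Prod>i<n. u i ^ h \<beta> i))"
      by (rule sum.reindex_cong[OF hinj refl]) simp
    also have "\<dots> = hom_eval n a c3 (\<lambda>i. u i ^ k)"
      unfolding hom_eval_def c3_def
      by (intro sum.cong refl) (simp add: c2d h_def power_mult)
    finally show ?thesis using avg by simp
  qed
  have root: "\<exists>w. z = w ^ k" for z :: complex
    using exists_complex_root[of k z] k by auto
  show ?thesis
  proof (rule good_from_fun_sym[where c=c3])
    fix \<sigma> :: "nat \<Rightarrow> nat" and z :: "nat \<Rightarrow> complex" assume s: "\<sigma> permutes {..<n}"
    define u where "u = (\<lambda>i. SOME w. z i = w ^ k)"
    have zu: "z = (\<lambda>i. u i ^ k)"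
    proof
      fix i show "z i = u i ^ k" unfolding u_def by (rule someI_ex) (rule root)
    qed
    have "hom_eval n a c3 (z \<circ> \<sigma>) = hom_eval n a c3 (\<lambda>i. (u \<circ> \<sigma>) i ^ k)"
      by (simp add: zu comp_def)
    also have "\<dots> = hom_eval (k*n) (k*a) c (blk n \<zeta> (u \<circ> \<sigma>))" by (rule trans[OF key c1[symmetric]])
    also have "\<dots> = hom_eval (k*n) (k*a) c (blk n \<zeta> u)" by (rule block_sym[OF n c s])
    also have "\<dots> = hom_eval n a c3 z" by (simp add: key c1 zu)
    finally show "hom_eval n a c3 (z \<circ> \<sigma>) = hom_eval n a c3 z" .
  next
    fix z :: "nat \<Rightarrow> complex" assume z: "z \<in> V n d"
    define u where "u = (\<lambda>i. if i = n - 1 then \<zeta> else (SOME w. z i = w ^ k))"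
    have zu: "u i ^ k = z i" if "i < n" for i
    proof (cases "i = n - 1")
      case True thus ?thesis using z \<zeta>k by (simp add: u_def V_def)
    next
      case False
      have "z i = (SOME w. z i = w ^ k) ^ k" by (rule someI_ex) (rule root)
      thus ?thesis using False unfolding u_def by simp
    qed
    define w where "w = (\<lambda>j. if j < k * n then blk n \<zeta> u j else 0)"
    have "w \<in> V (k*n) (k*d)"
    proof -
      have "w j ^ (k * d) = 1" if "j < k * n" for j
      proof -
        have "w j ^ (k * d) = (\<zeta> ^ k) ^ (j div n * d) * (u (j mod n) ^ k) ^ d"
          using that by (simp add: w_def blk_def power_mult_distrib power_mult[symmetric] mult_ac)
        also have "\<dots> = 1" using \<zeta>k zu[of "j mod n"] z n by (simp add: V_def)
        finally show ?thesis .
      qed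
      moreover have "w (k * n - 1) = 1"
      proof -
        have "w (k * n - 1) = \<zeta> ^ (k - 1) * \<zeta>"
          using n k kn_divmod[OF n k] by (simp add: w_def blk_def u_def)
        also have "\<dots> = 1"
        proof -
          obtain k' where kk: "k = Suc k'" using k by (cases k) auto
          have "\<zeta> ^ (k - 1) * \<zeta> = \<zeta> ^ Suc k'" unfolding kk by (simp only: power_Suc2 diff_Suc_1)
          thus ?thesis using \<zeta>k kk by (simp add: mult.commute)
        qed
        finally show ?thesis .
      qed
      ultimately show ?thesis by (auto simp: V_def w_def)
    qed
    hence "hom_eval (k*n) (k*a) c w \<noteq> 0" using nz by blast
    moreover have "hom_eval (k*n) (k*a) c w = hom_eval (k*n) (k*a) c (blk n \<zeta> u)"
      by (rule hom_eval_cong) (simp add: w_def)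
    moreover have "hom_eval n a c3 z = hom_eval n a c3 (\<lambda>i. u i ^ k)"
      by (rule hom_eval_cong) (simp add: zu)
    ultimately show "hom_eval n a c3 z \<noteq> 0" using key c1 by simp
  qed
qed


theorem proposition3p22:
  fixes n d a k :: nat
  assumes "n > 0" and "d > 0" and "a > 0" and "k > 0"
    and "bad n d a"
  shows "bad n (k * d) a \<and> bad (k * n) d a \<and> bad (k * n) (k * d) (k * a)"
  using assms part1[of n k d a] part2[of k n d a] part3[of k n d a] unfolding bad_def by blast

end
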